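(* Let $t>0$ and $\gamma\ge 9$, and let $$r_2(\gamma)=\frac{\gamma-1-\sqrt{(\gamma-1)(\gamma-9)}}{4}.$$ Consider the infinite linear program: minimize $\phi$ over real $\phi$ and sequences $(x_i)_{i\ge1}$ with $x_i\ge0$ for all $i$, subject to $$\sum_{i=1}^{n}2x_i+(1-\gamma)x_{n-1}+nt\le\phi\qquad\text{for all } n\ge1,$$ with the convention $x_0=0$ (so the constraints read $2x_1+t\le\phi$, $(3-\gamma)x_1+2x_2+2t\le\phi$, $2x_1+(3-\gamma)x_2+2x_3+3t\le\phi$, etc.). Then the optimal value is $\phi(\gamma)=r_2(\gamma)\,t$, and it is attained by the strategy $$x_i=\tfrac12\big(r_2(\gamma)^i-1\big)t,\qquad i\ge1.$$ Equivalently, in the search-with-turn-cost model described in the context, this strategy has worst-case total cost $\gamma D+r_2(\gamma)t$, and no strategy guarantees worst-case total cost $\gamma D+\phi$ with $\phi<r_2(\gamma)t$.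
   Context: Model of searching on a line with turn cost and no lower bound on the target distance: the searcher alternates sides, at step $i$ walking distance $x_i\ge0$ from the origin on one side and back (the side alternating with $i$); the cost is the total distance walked plus $t$ for each excursion (turn). The target is at unknown distance $D>0$. A strategy guarantees total cost $\gamma D+\phi$ if for every target position the cost of finding it is at most $\gamma D+\phi$; the $n$-th linear constraint above expresses this for a target just beyond $x_{n-1}$ on the side visited at steps $n-1$ and $n+1$. *)

theory Defs
  imports Complex_Main
begin

definition r2 :: "real \<Rightarrow> real" where
  "r2 \<gamma> = (\<gamma> - 1 - sqrt ((\<gamma> - 1) * (\<gamma> - 9))) / 4"

text \<open>Feasibility for the infinite LP. The sequence is indexed from 1;
  the convention x_0 = 0 is built in (the value x 0 is ignored).\<close>
definition lp_feasible :: "real \<Rightarrow> real \<Rightarrow> real \<Rightarrow> (nat \<Rightarrow> real) \<Rightarrow> bool" where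
  "lp_feasible t \<gamma> \<phi> x \<longleftrightarrow>
     (\<forall>i\<ge>1. 0 \<le> x i) \<and>
     (\<forall>n\<ge>1. (\<Sum>i=1..n. 2 * x i) + (1 - \<gamma>) * (if n - 1 = 0 then 0 else x (n - 1))
               + real n * t \<le> \<phi>)"

end

theory Submission
  imports Defs
begin

lemma r2_facts:
  fixes g :: real assumes "g \<ge> 9"
  shows "1 < r2 g" "r2 g \<le> 2" "g > 9 \<Longrightarrow> r2 g < 2"
    "2 * r2 g ^ 2 - (g - 1) * r2 g + (g - 1) = 0"
proof -
  let ?s = "sqrt ((g - 1) * (g - 9))"
  have s0: "?s \<ge> 0" using assms by simp
  have ss: "?s ^ 2 = (g - 1) * (g - 9)" using assms by simp
  have "?s < g - 5"
  proof -
    have "(g - 1) * (g - 9) < (g - 5) ^ 2" by (simp add: power2_eq_square algebra_simps)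
    hence "?s < sqrt ((g - 5) ^ 2)" by (rule real_sqrt_less_mono)
    thus ?thesis using assms by simp
  qed
  thus "1 < r2 g" unfolding r2_def by simp
  have "?s \<ge> g - 9"
  proof -
    have "(g - 9) ^ 2 \<le> (g - 1) * (g - 9)" using assms by (simp add: power2_eq_square algebra_simps)
    thus ?thesis by (rule real_le_rsqrt)
  qed
  thus "r2 g \<le> 2" unfolding r2_def by simp
  show "g > 9 \<Longrightarrow> r2 g < 2"
  proof -
    assume g: "g > 9"
    have "(g - 9) ^ 2 < (g - 1) * (g - 9)" using g by (simp add: power2_eq_square algebra_simps)
    hence "?s > g - 9" by (rule real_less_rsqrt)
    thus ?thesis unfolding r2_def by simp
  qed
  have e: "4 * r2 g = g - 1 - ?s" unfolding r2_def by simp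
  hence "?s = g - 1 - 4 * r2 g" by simp
  hence "(g - 1 - 4 * r2 g) ^ 2 = (g - 1) * (g - 9)" using ss by simp
  thus "2 * r2 g ^ 2 - (g - 1) * r2 g + (g - 1) = 0"
    by (simp add: power2_eq_square algebra_simps)
qed

lemma geom_sum1:
  fixes r :: real assumes "r \<noteq> 1"
  shows "(\<Sum>i=1..n. r ^ i) = r * (r ^ n - 1) / (r - 1)"
proof (induction n)
  case 0 then show ?case by simp
next
  case (Suc n)
  have "(\<Sum>i=1..Suc n. r ^ i) = (\<Sum>i=1..n. r ^ i) + r ^ Suc n" by simp
  also have "\<dots> = r * (r ^ n - 1) / (r - 1) + r ^ Suc n" using Suc by simp
  also have "\<dots> = r * (r ^ Suc n - 1) / (r - 1)" using assms
    by (simp add: field_simps)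
  finally show ?case .
qed

lemma V_ident:
  fixes w g :: real and x :: "nat \<Rightarrow> real"
  assumes eq: "2 * w ^ 2 - (g - 1) * w + (g - 1) = 0" and w1: "w \<noteq> 1"
  shows "(\<Sum>n=1..Suc N. w ^ (Suc (Suc N) - n) * ((\<Sum>i=1..n. 2 * x i) + (1 - g) * (if n - 1 = 0 then 0 else x (n - 1))))
     = 2 * w * x (Suc N) - 2 * w / (w - 1) * (\<Sum>i=1..N. x i)"
proof (induction N)
  case 0 then show ?case by simp
next
  case (Suc N)
  let ?y = "\<lambda>n. (\<Sum>i=1..n. 2 * x i) + (1 - g) * (if n - 1 = 0 then 0 else x (n - 1))"
  have "(\<Sum>n=1..Suc (Suc N). w ^ (Suc (Suc (Suc N)) - n) * ?y n)
      = (\<Sum>n=1..Suc N. w ^ (Suc (Suc (Suc N)) - n) * ?y n) + w * ?y (Suc (Suc N))" by simp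
  also have "(\<Sum>n=1..Suc N. w ^ (Suc (Suc (Suc N)) - n) * ?y n) = w * (\<Sum>n=1..Suc N. w ^ (Suc (Suc N) - n) * ?y n)"
    unfolding sum_distrib_left
    by (rule sum.cong) (auto simp: Suc_diff_le)
  also have "?y (Suc (Suc N)) = 2 * (\<Sum>i=1..N. x i) + 2 * x (Suc N) + 2 * x (Suc (Suc N)) + (1 - g) * x (Suc N)"
    by (simp add: sum_distrib_left)
  finally have "(\<Sum>n=1..Suc (Suc N). w ^ (Suc (Suc (Suc N)) - n) * ?y n)
     = w * (2 * w * x (Suc N) - 2 * w / (w - 1) * (\<Sum>i=1..N. x i)) + w * (2 * (\<Sum>i=1..N. x i) + 2 * x (Suc N) + 2 * x (Suc (Suc N)) + (1 - g) * x (Suc N))"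
    using Suc by simp
  also have "\<dots> = 2 * w * x (Suc (Suc N)) - 2 * w / (w - 1) * ((\<Sum>i=1..N. x i) + x (Suc N))"
  proof -
    define q where "q = 2 * w / (w - 1)"
    have hq: "q * (w - 1) = 2 * w" using w1 unfolding q_def by simp
    have g1: "g - 1 = 2 * w ^ 2 / (w - 1)" using eq w1
      by (simp add: field_simps)
    have hg: "1 - g = - (w * q)" using g1 unfolding q_def by (simp add: power2_eq_square)
    define S where "S = (\<Sum>i=1..N. x i)"
    have "w * (2 * w * x (Suc N) - q * S) + w * (2 * S + 2 * x (Suc N) + 2 * x (Suc (Suc N)) + (1 - g) * x (Suc N))
        - (2 * w * x (Suc (Suc N)) - q * (S + x (Suc N)))
        = (2 * w - q * (w - 1)) * S + (w + 1) * (2 * w - q * (w - 1)) * x (Suc N)"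
      unfolding hg by (simp add: algebra_simps)
    also have "\<dots> = 0" using hq by simp
    finally show ?thesis unfolding q_def S_def by simp
  qed
  finally show ?case by simp
qed

lemma K_closed:
  fixes w \<phi> t :: real assumes w1: "w \<noteq> 1"
  shows "(\<Sum>n=1..N. w ^ (Suc N - n) * (\<phi> - real n * t))
     = w * (w * t / (w - 1) - \<phi>) / (w - 1) * (1 - w ^ N) + w * t / (w - 1) * real N"
proof (induction N)
  case 0 then show ?case by simp
next
  case (Suc N)
  have "(\<Sum>n=1..Suc N. w ^ (Suc (Suc N) - n) * (\<phi> - real n * t))
      = (\<Sum>n=1..N. w ^ (Suc (Suc N) - n) * (\<phi> - real n * t)) + w * (\<phi> - real (Suc N) * t)" by simp
  also have "(\<Sum>n=1..N. w ^ (Suc (Suc N) - n) * (\<phi> - real n * t)) = w * (\<Sum>n=1..N. w ^ (Suc N - n) * (\<phi> - real n * t))"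
    unfolding sum_distrib_left
    by (rule sum.cong) (auto simp: Suc_diff_le)
  finally have "(\<Sum>n=1..Suc N. w ^ (Suc (Suc N) - n) * (\<phi> - real n * t))
     = w * (w * (w * t / (w - 1) - \<phi>) / (w - 1) * (1 - w ^ N) + w * t / (w - 1) * real N) + w * (\<phi> - real (Suc N) * t)"
    using Suc by simp
  also have "\<dots> = w * (w * t / (w - 1) - \<phi>) / (w - 1) * (1 - w ^ Suc N) + w * t / (w - 1) * real (Suc N)"
  proof -
    define \<beta> where "\<beta> = w * t / (w - 1)"
    define \<delta> where "\<delta> = w * (\<beta> - \<phi>) / (w - 1)"
    have E1: "\<delta> * (w - 1) - w * (\<beta> - \<phi>) = 0" using w1 unfolding \<delta>_def by simp
    have E2: "\<beta> * (w - 1) - w * t = 0" using w1 unfolding \<beta>_def by simp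
    have "w * (\<delta> * (1 - w ^ N) + \<beta> * real N) + w * (\<phi> - real (Suc N) * t)
       - (\<delta> * (1 - w ^ Suc N) + \<beta> * real (Suc N))
       = (\<delta> * (w - 1) - w * (\<beta> - \<phi>)) + (real N + 1) * (\<beta> * (w - 1) - w * t)"
      by (simp add: algebra_simps)
    also have "\<dots> = 0" using E1 E2 by simp
    finally show ?thesis unfolding \<beta>_def[symmetric] \<delta>_def[symmetric] by (simp add: algebra_simps)
  qed
  finally show ?case .
qed


lemma lower_gt9:
  fixes t g \<phi> :: real and x :: "nat \<Rightarrow> real"
  assumes t: "t > 0" and g: "g > 9" and F: "lp_feasible t g \<phi> x"
  shows "r2 g * t \<le> \<phi>"
proof (rule ccontr)
  assume "\<not> ?thesis"
  define r where "r = r2 g"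
  have lt: "\<phi> < r * t" using \<open>\<not> _\<close> unfolding r_def by simp
  have r1: "1 < r" and r2': "r < 2" and eqr: "2 * r ^ 2 - (g - 1) * r + (g - 1) = 0"
    using r2_facts[of g] g unfolding r_def by auto
  define A where "A = r / (r - 1)"
  have eqA: "2 * A ^ 2 - (g - 1) * A + (g - 1) = 0"
  proof -
    have Ad: "A * (r - 1) = r" unfolding A_def using r1 by simp
    have "(r - 1) ^ 2 * (2 * A ^ 2 - (g - 1) * A + (g - 1))
       = 2 * (A * (r - 1)) ^ 2 - (g - 1) * (A * (r - 1)) * (r - 1) + (g - 1) * (r - 1) ^ 2"
      by (simp add: algebra_simps power2_eq_square)
    also have "\<dots> = 2 * r ^ 2 - (g - 1) * r + (g - 1)" unfolding Ad by (simp add: algebra_simps power2_eq_square)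
    finally have "(r - 1) ^ 2 * (2 * A ^ 2 - (g - 1) * A + (g - 1)) = 0" using eqr by simp
    thus ?thesis using r1 by simp
  qed
  have rA: "r < A" unfolding A_def using r1 r2' by (simp add: field_simps)
  have A1: "A > 1" using rA r1 by simp
  have AA: "A / (A - 1) = r" unfolding A_def using r1 by (simp add: field_simps)
  have AA2: "2 * A / (A - 1) = 2 * r" using AA by (metis times_divide_eq_right)
  define y where "y n = (\<Sum>i=1..n. 2 * x i) + (1 - g) * (if n - 1 = 0 then 0 else x (n - 1))" for n
  have xpos: "\<And>i. i \<ge> 1 \<Longrightarrow> 0 \<le> x i" using F unfolding lp_feasible_def by auto
  have yb: "\<And>n. n \<ge> 1 \<Longrightarrow> y n \<le> \<phi> - real n * t" using F unfolding lp_feasible_def y_def by force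
  define K where "K w M = (\<Sum>n=1..M. w ^ (Suc M - n) * (\<phi> - real n * t))" for w M
  have key: "0 \<le> K A (Suc N) - K r (Suc N)" for N
  proof -
    have VA: "(\<Sum>n=1..Suc N. A ^ (Suc (Suc N) - n) * y n) = 2 * A * x (Suc N) - 2 * A / (A - 1) * (\<Sum>i=1..N. x i)"
      unfolding y_def by (rule V_ident[OF eqA]) (use A1 in simp)
    have Vr: "(\<Sum>n=1..Suc N. r ^ (Suc (Suc N) - n) * y n) = 2 * r * x (Suc N) - 2 * r / (r - 1) * (\<Sum>i=1..N. x i)"
      unfolding y_def by (rule V_ident[OF eqr]) (use r1 in simp)
    have S0: "0 \<le> (\<Sum>i=1..N. x i)" by (rule sum_nonneg) (simp add: xpos)
    have x0: "0 \<le> x (Suc N)" by (simp add: xpos)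
    have c1: "2 * r \<le> 2 * r / (r - 1)" using r1 r2' by (simp add: field_simps)
    have "0 \<le> (2 * A * x (Suc N) - 2 * A / (A - 1) * (\<Sum>i=1..N. x i)) - (2 * r * x (Suc N) - 2 * r / (r - 1) * (\<Sum>i=1..N. x i))"
    proof -
      have "(2 * A * x (Suc N) - 2 * A / (A - 1) * (\<Sum>i=1..N. x i)) - (2 * r * x (Suc N) - 2 * r / (r - 1) * (\<Sum>i=1..N. x i))
          = 2 * (A - r) * x (Suc N) + (2 * r / (r - 1) - 2 * r) * (\<Sum>i=1..N. x i)"
        unfolding AA2 by (simp add: algebra_simps)
      also have "\<dots> \<ge> 0" using rA x0 S0 c1 by (intro add_nonneg_nonneg mult_nonneg_nonneg) auto
      finally show ?thesis by simp
    qed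
    also have "\<dots> = (\<Sum>n=1..Suc N. (A ^ (Suc (Suc N) - n) - r ^ (Suc (Suc N) - n)) * y n)"
      unfolding VA[symmetric] Vr[symmetric] by (simp add: sum_subtractf algebra_simps)
    also have "\<dots> \<le> (\<Sum>n=1..Suc N. (A ^ (Suc (Suc N) - n) - r ^ (Suc (Suc N) - n)) * (\<phi> - real n * t))"
    proof (rule sum_mono)
      fix n assume n: "n \<in> {1..Suc N}"
      have "r ^ (Suc (Suc N) - n) \<le> A ^ (Suc (Suc N) - n)" using rA r1 by (intro power_mono) auto
      thus "(A ^ (Suc (Suc N) - n) - r ^ (Suc (Suc N) - n)) * y n \<le> (A ^ (Suc (Suc N) - n) - r ^ (Suc (Suc N) - n)) * (\<phi> - real n * t)"
        using yb[of n] n by (intro mult_left_mono) auto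
    qed
    also have "\<dots> = K A (Suc N) - K r (Suc N)" unfolding K_def by (simp only: sum_subtractf[symmetric] left_diff_distrib)
    finally show ?thesis .
  qed
  define dA where "dA = A * (A * t / (A - 1) - \<phi>) / (A - 1)"
  define dr where "dr = r * (r * t / (r - 1) - \<phi>) / (r - 1)"
  define h where "h M = dA * (1 - A ^ M) - dr * (1 - r ^ M)" for M
  have Att: "A * t / (A - 1) = r * t" using AA by (metis times_divide_eq_left)
  have dApos: "dA > 0" unfolding dA_def Att using lt A1 by (intro divide_pos_pos mult_pos_pos) auto
  have hK: "K A M - K r M \<le> h M" for M
  proof -
    have "K A M - K r M = dA * (1 - A ^ M) + A * t / (A - 1) * real M - (dr * (1 - r ^ M) + r * t / (r - 1) * real M)"
      unfolding K_def dA_def dr_def using K_closed A1 r1 by simp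
    also have "\<dots> = h M + (A / (A - 1) - r / (r - 1)) * t * real M"
      unfolding h_def by (simp add: algebra_simps)
    also have "\<dots> \<le> h M"
    proof -
      have "A / (A - 1) - r / (r - 1) \<le> 0" unfolding AA using rA by (simp add: A_def)
      thus ?thesis using t by (simp add: mult_nonpos_nonneg)
    qed
    finally show ?thesis .
  qed
  have lim: "(\<lambda>M. dA * (1 / A) ^ M - dA - dr * (1 / A) ^ M + dr * (r / A) ^ M) \<longlonglongrightarrow> dA * 0 - dA - dr * 0 + dr * 0"
    using A1 rA r1 by (intro tendsto_intros) auto
  hence "eventually (\<lambda>M. dA * (1 / A) ^ M - dA - dr * (1 / A) ^ M + dr * (r / A) ^ M < 0) sequentially"
    using dApos by (intro order_tendstoD(2)) auto
  then obtain M0 where M0: "\<And>M. M \<ge> M0 \<Longrightarrow> dA * (1 / A) ^ M - dA - dr * (1 / A) ^ M + dr * (r / A) ^ M < 0"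
    unfolding eventually_sequentially by blast
  define M where "M = Suc M0"
  have "h M / A ^ M = dA * (1 / A) ^ M - dA - dr * (1 / A) ^ M + dr * (r / A) ^ M"
    unfolding h_def using A1 by (simp add: field_simps power_divide)
  also have "\<dots> < 0" using M0[of M] unfolding M_def by simp
  finally have "h M < 0" using A1 by (simp add: divide_less_0_iff)
  moreover have "0 \<le> h M" using key[of M0] hK[of "Suc M0"] unfolding M_def by simp
  ultimately show False by simp
qed


lemma feas_mono:
  assumes "lp_feasible t g \<phi> x" "g \<le> g'"
  shows "lp_feasible t g' \<phi> x"
  unfolding lp_feasible_def
proof (intro conjI allI impI)
  have xpos: "\<And>i. i \<ge> 1 \<Longrightarrow> 0 \<le> x i" using assms(1) unfolding lp_feasible_def by auto
  show "\<And>i. 1 \<le> i \<Longrightarrow> 0 \<le> x i" by (rule xpos)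
  fix n :: nat assume n: "1 \<le> n"
  have c: "(\<Sum>i=1..n. 2 * x i) + (1 - g) * (if n - 1 = 0 then 0 else x (n - 1)) + real n * t \<le> \<phi>"
    using assms(1) n unfolding lp_feasible_def by auto
  have X: "0 \<le> (if n - 1 = 0 then 0 else x (n - 1))" using xpos by auto
  have "(1 - g') * (if n - 1 = 0 then 0 else x (n - 1)) \<le> (1 - g) * (if n - 1 = 0 then 0 else x (n - 1))"
    using X assms(2) by (intro mult_right_mono) auto
  thus "(\<Sum>i=1..n. 2 * x i) + (1 - g') * (if n - 1 = 0 then 0 else x (n - 1)) + real n * t \<le> \<phi>"
    using c by linarith
qed

lemma lower_all:
  fixes t g \<phi> :: real and x :: "nat \<Rightarrow> real"
  assumes t: "t > 0" and g: "g \<ge> 9" and F: "lp_feasible t g \<phi> x"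
  shows "r2 g * t \<le> \<phi>"
proof (cases "g > 9")
  case True thus ?thesis using lower_gt9 t F by blast
next
  case False
  hence g9: "g = 9" using g by simp
  have ev: "eventually (\<lambda>g'. r2 g' * t \<le> \<phi>) (at_right 9)"
    using eventually_at_right_less[of "9::real"]
  proof (rule eventually_mono)
    fix g' :: real assume "9 < g'"
    thus "r2 g' * t \<le> \<phi>" using lower_gt9[OF t _ feas_mono[OF F]] g9 by simp
  qed
  have lim: "((\<lambda>g'. r2 g' * t) \<longlongrightarrow> r2 9 * t) (at_right 9)"
    unfolding r2_def by (intro tendsto_intros) simp
  have "r2 9 * t \<le> \<phi>"
    by (rule tendsto_le[OF trivial_limit_at_right_real tendsto_const lim ev])
  thus ?thesis using g9 by simp
qed

lemma feasible:
  fixes t g :: real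
  assumes t: "t > 0" and g: "g \<ge> 9"
  shows "lp_feasible t g (r2 g * t) (\<lambda>i. (r2 g ^ i - 1) * t / 2)"
  unfolding lp_feasible_def
proof (intro conjI allI impI)
  define r where "r = r2 g"
  have r1: "1 < r" and eqr: "2 * r ^ 2 - (g - 1) * r + (g - 1) = 0"
    using r2_facts[OF g] unfolding r_def by auto
  show "\<And>i. 1 \<le> i \<Longrightarrow> 0 \<le> (r2 g ^ i - 1) * t / 2"
    using r1 t unfolding r_def by (simp add: one_le_power)
  fix n :: nat assume n: "1 \<le> n"
  have S: "(\<Sum>i=1..n. 2 * ((r ^ i - 1) * t / 2)) = t * (r * (r ^ n - 1) / (r - 1)) - real n * t"
  proof -
    have "(\<Sum>i=1..n. 2 * ((r ^ i - 1) * t / 2)) = (\<Sum>i=1..n. t * r ^ i - t)"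
      by (rule sum.cong) (auto simp: field_simps)
    also have "\<dots> = t * (\<Sum>i=1..n. r ^ i) - real n * t"
      by (simp add: sum_subtractf sum_distrib_left)
    finally show ?thesis using geom_sum1[of r n] r1 by simp
  qed
  have "(\<Sum>i=1..n. 2 * ((r ^ i - 1) * t / 2)) + (1 - g) * (if n - 1 = 0 then 0 else (r ^ (n - 1) - 1) * t / 2) + real n * t = r * t"
  proof (cases "n = 1")
    case True thus ?thesis using r1 by (simp add: field_simps)
  next
    case False
    then obtain m where m: "n = Suc (Suc m)" using n by (metis Suc_le_D le_SucE le_zero_eq nat.exhaust not_less_eq_eq One_nat_def)
    have g1: "1 - g = - (2 * r ^ 2 / (r - 1))" using eqr r1 by (simp add: field_simps)
    define u where "u = r ^ Suc m"
    have rn: "r ^ n = r * u" unfolding u_def m by simp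
    have d: "r - 1 \<noteq> 0" using r1 by simp
    have "t * (r * (r * u - 1) / (r - 1)) + (- (2 * r ^ 2 / (r - 1))) * ((u - 1) * t / 2)
        = t * (r * (r * u - 1) - r ^ 2 * (u - 1)) / (r - 1)"
    proof -
      have e1: "t * (r * (r * u - 1) / (r - 1)) = t * (r * (r * u - 1)) / (r - 1)" by simp
      have e2: "(- (2 * r ^ 2 / (r - 1))) * ((u - 1) * t / 2) = - (t * (r ^ 2 * (u - 1)) / (r - 1))"
        using d by (simp add: field_simps)
      show ?thesis unfolding e1 e2 by (simp add: diff_divide_distrib right_diff_distrib)
    qed
    also have "\<dots> = t * (r * (r - 1)) / (r - 1)" by (simp add: algebra_simps power2_eq_square)
    also have "\<dots> = r * t" using d by simp
    finally have "t * (r * (r * u - 1) / (r - 1)) - real n * t + (- (2 * r ^ 2 / (r - 1))) * ((u - 1) * t / 2) + real n * t = r * t"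
      by simp
    thus ?thesis unfolding S rn g1 using m u_def by simp
  qed
  thus "(\<Sum>i=1..n. 2 * ((r2 g ^ i - 1) * t / 2)) + (1 - g) * (if n - 1 = 0 then 0 else (r2 g ^ (n - 1) - 1) * t / 2) + real n * t \<le> r2 g * t"
    unfolding r_def by simp
qed

theorem theorem3:
  fixes t \<gamma> :: real
  assumes "t > 0" and "\<gamma> \<ge> 9"
  shows "lp_feasible t \<gamma> (r2 \<gamma> * t) (\<lambda>i. (r2 \<gamma> ^ i - 1) * t / 2)
       \<and> (\<forall>\<phi> x. lp_feasible t \<gamma> \<phi> x \<longrightarrow> r2 \<gamma> * t \<le> \<phi>)"
  using feasible[OF assms] lower_all[OF assms] by blast

end
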